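(* Let $R$ be a supertropical semiring, $V$ a free $R$-module with base $(\varepsilon_i\mid i\in I)$, and $q:V\to R$ a quasilinear quadratic form (i.e. $q(x+y)=q(x)+q(y)$ for all $x,y\in V$). If $x\in V\setminus\{0\}$ is $q$-minimal, then $|\operatorname{supp}(x)|=1$ if $q(x)\in\mathcal T$, and $|\operatorname{supp}(x)|\le2$ if $q(x)\in\mathcal G$.
   Context: All semirings are commutative with $1$. A semiring $R$ is supertropical if $e:=1+1$ satisfies $e+e=e$ and, for all $x,y\in R$: if $ex\neq ey$ then $x+y\in\{x,y\}$, and if $ex=ey$ then $x+y=ey$. $\mathcal T=R\setminus eR$, $\mathcal G=eR\setminus\{0\}$. A quadratic form on an $R$-module $V$ is a map $q:V\to R$ with $q(ax)=a^2q(x)$ such that some symmetric bilinear $b$ satisfies $q(x+y)=q(x)+q(y)+b(x,y)$. Every $R$-module carries the minimal ordering $x\le y\iff\exists z:\ x+z=y$; $x<y$ means $x\le y$, $x\neq y$. A vector $x$ is $q$-minimal if there is no $x'<x$ with $q(x')=q(x)$. For $x=\sum_i x_i\varepsilon_i$, $\operatorname{supp}(x)=\{i: x_i\neq0\}$. *)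

theory Defs
  imports Main
begin

definition supertropical :: "'a::comm_semiring_1 itself \<Rightarrow> bool" where
  "supertropical _ \<longleftrightarrow>
     (let e = (1 + 1 :: 'a) in
        e + e = e \<and>
        (\<forall>x y::'a. (e * x \<noteq> e * y \<longrightarrow> x + y \<in> {x, y}) \<and>
                   (e * x = e * y \<longrightarrow> x + y = e * y)))"

definition ghost_unit :: "'a::comm_semiring_1" where
  "ghost_unit = 1 + 1"

definition tangibles :: "'a::comm_semiring_1 set" where
  "tangibles = UNIV - range (\<lambda>r. ghost_unit * r)"

definition ghosts :: "'a::comm_semiring_1 set" where
  "ghosts = range (\<lambda>r. ghost_unit * r) - {0}"

text \<open>The free module with base indexed by type 'i: finitely supported functions.\<close>
definition freeV :: "('i \<Rightarrow> 'a::comm_semiring_1) set" where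
  "freeV = {x. finite {i. x i \<noteq> 0}}"

definition vadd :: "('i \<Rightarrow> 'a::comm_semiring_1) \<Rightarrow> ('i \<Rightarrow> 'a) \<Rightarrow> ('i \<Rightarrow> 'a)" where
  "vadd x y = (\<lambda>i. x i + y i)"

definition vsmult :: "'a::comm_semiring_1 \<Rightarrow> ('i \<Rightarrow> 'a) \<Rightarrow> ('i \<Rightarrow> 'a)" where
  "vsmult a x = (\<lambda>i. a * x i)"

definition vzero :: "'i \<Rightarrow> 'a::comm_semiring_1" where
  "vzero = (\<lambda>i. 0)"

definition supp :: "('i \<Rightarrow> 'a::comm_semiring_1) \<Rightarrow> 'i set" where
  "supp x = {i. x i \<noteq> 0}"

definition symmetric_bilinear ::
  "(('i \<Rightarrow> 'a::comm_semiring_1) \<Rightarrow> ('i \<Rightarrow> 'a) \<Rightarrow> 'a) \<Rightarrow> bool" where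
  "symmetric_bilinear b \<longleftrightarrow>
     (\<forall>x\<in>freeV. \<forall>y\<in>freeV. b x y = b y x) \<and>
     (\<forall>x\<in>freeV. \<forall>x'\<in>freeV. \<forall>y\<in>freeV. b (vadd x x') y = b x y + b x' y) \<and>
     (\<forall>a. \<forall>x\<in>freeV. \<forall>y\<in>freeV. b (vsmult a x) y = a * b x y)"

definition quadratic_form :: "(('i \<Rightarrow> 'a::comm_semiring_1) \<Rightarrow> 'a) \<Rightarrow> bool" where
  "quadratic_form q \<longleftrightarrow>
     (\<forall>a. \<forall>x\<in>freeV. q (vsmult a x) = a ^ 2 * q x) \<and>
     (\<exists>b. symmetric_bilinear b \<and>
          (\<forall>x\<in>freeV. \<forall>y\<in>freeV. q (vadd x y) = q x + q y + b x y))"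

definition quasilinear :: "(('i \<Rightarrow> 'a::comm_semiring_1) \<Rightarrow> 'a) \<Rightarrow> bool" where
  "quasilinear q \<longleftrightarrow> (\<forall>x\<in>freeV. \<forall>y\<in>freeV. q (vadd x y) = q x + q y)"

definition vle :: "('i \<Rightarrow> 'a::comm_semiring_1) \<Rightarrow> ('i \<Rightarrow> 'a) \<Rightarrow> bool" where
  "vle x y \<longleftrightarrow> (\<exists>z\<in>freeV. vadd x z = y)"

definition vless :: "('i \<Rightarrow> 'a::comm_semiring_1) \<Rightarrow> ('i \<Rightarrow> 'a) \<Rightarrow> bool" where
  "vless x y \<longleftrightarrow> vle x y \<and> x \<noteq> y"

definition q_minimal :: "(('i \<Rightarrow> 'a::comm_semiring_1) \<Rightarrow> 'a) \<Rightarrow> ('i \<Rightarrow> 'a) \<Rightarrow> bool" where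
  "q_minimal q x \<longleftrightarrow> \<not> (\<exists>x'\<in>freeV. vless x' x \<and> q x' = q x)"

end

theory Submission
  imports Defs
begin

lemma st_facts:
  assumes "supertropical TYPE('a::comm_semiring_1)"
  shows "\<And>x y::'a. ghost_unit * x \<noteq> ghost_unit * y \<Longrightarrow> x + y \<in> {x, y}"
    and "\<And>x y::'a. ghost_unit * x = ghost_unit * y \<Longrightarrow> x + y = ghost_unit * y"
    and "(ghost_unit::'a) * ghost_unit = ghost_unit"
proof -
  show "\<And>x y::'a. ghost_unit * x \<noteq> ghost_unit * y \<Longrightarrow> x + y \<in> {x, y}"
    using assms unfolding supertropical_def ghost_unit_def Let_def by blast
  show "\<And>x y::'a. ghost_unit * x = ghost_unit * y \<Longrightarrow> x + y = ghost_unit * y"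
    using assms unfolding supertropical_def ghost_unit_def Let_def by blast
  have "(1+1::'a) + (1+1) = 1+1"
    using assms unfolding supertropical_def Let_def by blast
  then show "(ghost_unit::'a) * ghost_unit = ghost_unit"
    unfolding ghost_unit_def by (simp add: distrib_left distrib_right)
qed

lemma sum_two:
  fixes f :: "'i \<Rightarrow> 'a::comm_semiring_1"
  assumes st: "supertropical TYPE('a)" and "finite S" "S \<noteq> {}"
  shows "(\<exists>i\<in>S. sum f S = f i) \<or>
         (\<exists>i\<in>S. \<exists>j\<in>S. i \<noteq> j \<and> sum f S = f i + f j \<and> sum f S \<in> range (\<lambda>r. ghost_unit * r))"
  using assms(2,3)
proof (induction S rule: finite_ne_induct)
  case (singleton x)
  then show ?case by simp
next
  case (insert k S)
  note F = st_facts[OF st]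
  have s: "sum f (insert k S) = f k + sum f S" using insert by simp
  from insert.IH show ?case
  proof
    assume "\<exists>i\<in>S. sum f S = f i"
    then obtain i where i: "i \<in> S" "sum f S = f i" by blast
    have ik: "i \<noteq> k" using i insert by auto
    show ?case
    proof (cases "ghost_unit * f k = ghost_unit * f i")
      case True
      then have "f k + f i = ghost_unit * f i" using F(2) by blast
      then show ?thesis using s i ik by auto
    next
      case False
      then have "f k + f i \<in> {f k, f i}" using F(1) by blast
      then show ?thesis using s i by auto
    qed
  next
    assume "\<exists>i\<in>S. \<exists>j\<in>S. i \<noteq> j \<and> sum f S = f i + f j \<and> sum f S \<in> range (\<lambda>r. ghost_unit * r)"
    then obtain i j r where ij: "i \<in> S" "j \<in> S" "i \<noteq> j" "sum f S = f i + f j"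
      "sum f S = ghost_unit * r" by blast
    show ?case
    proof (cases "ghost_unit * f k = ghost_unit * sum f S")
      case True
      then have "f k + sum f S = ghost_unit * sum f S" using F(2) by blast
      also have "\<dots> = sum f S" using ij(5) F(3) by (simp add: mult.assoc[symmetric])
      finally have "sum f (insert k S) = f i + f j \<and> sum f (insert k S) \<in> range (\<lambda>r. ghost_unit * r)"
        using s ij by (metis rangeI)
      then show ?thesis using ij by blast
    next
      case False
      then have "f k + sum f S \<in> {f k, sum f S}" using F(1) by blast
      then have "sum f (insert k S) = f k \<or> sum f (insert k S) = sum f S" using s by simp
      then show ?thesis
      proof
        assume "sum f (insert k S) = f k" then show ?thesis by auto
      next
        assume a: "sum f (insert k S) = sum f S"
        then have "sum f (insert k S) = f i + f j \<and> sum f (insert k S) \<in> range (\<lambda>r. ghost_unit * r)"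
          using ij by (metis rangeI)
        then show ?thesis using ij by blast
      qed
    qed
  qed
qed

definition restr :: "('i \<Rightarrow> 'a::comm_semiring_1) \<Rightarrow> 'i set \<Rightarrow> 'i \<Rightarrow> 'a" where
  "restr x T = (\<lambda>j. if j \<in> T then x j else 0)"

lemma restr_freeV: "finite T \<Longrightarrow> restr x T \<in> freeV"
proof -
  assume "finite T"
  moreover have "{i. restr x T i \<noteq> 0} \<subseteq> T" unfolding restr_def by auto
  ultimately show ?thesis unfolding freeV_def using finite_subset by blast
qed

lemma q_restr:
  fixes q :: "('i \<Rightarrow> 'a::comm_semiring_1) \<Rightarrow> 'a"
  assumes "quadratic_form q" "quasilinear q" "finite T"
  shows "q (restr x T) = (\<Sum>i\<in>T. q (restr x {i}))"
  using assms(3)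
proof (induction T rule: finite_induct)
  case empty
  have z: "vzero \<in> freeV" unfolding freeV_def vzero_def by simp
  have "q (vsmult 0 vzero) = 0 ^ 2 * q vzero"
    using assms(1) z unfolding quadratic_form_def by blast
  moreover have "vsmult 0 vzero = restr x {}"
    unfolding vsmult_def vzero_def restr_def by simp
  ultimately show ?case by simp
next
  case (insert k T)
  have "restr x (insert k T) = vadd (restr x {k}) (restr x T)"
    using insert unfolding vadd_def restr_def by auto
  moreover have "q (vadd (restr x {k}) (restr x T)) = q (restr x {k}) + q (restr x T)"
    using assms(2) restr_freeV insert unfolding quasilinear_def by blast
  ultimately show ?case using insert by simp
qed

theorem corollary6p5:
  fixes q :: "('i \<Rightarrow> 'a::comm_semiring_1) \<Rightarrow> 'a"
    and x :: "'i \<Rightarrow> 'a"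
  assumes "supertropical TYPE('a)"
    and "quadratic_form q"
    and "quasilinear q"
    and "x \<in> freeV" and "x \<noteq> vzero"
    and "q_minimal q x"
  shows "(q x \<in> tangibles \<longrightarrow> card (supp x) = 1) \<and>
         (q x \<in> ghosts \<longrightarrow> card (supp x) \<le> 2)"
proof -
  define S where "S = supp x"
  define f where "f i = q (restr x {i})" for i
  have fin: "finite S" using assms(4) unfolding S_def freeV_def supp_def by simp
  have ne: "S \<noteq> {}" using assms(5) unfolding S_def supp_def vzero_def by auto
  have xS: "restr x S = x" unfolding restr_def S_def supp_def by auto
  have key: "\<And>T. T \<subseteq> S \<Longrightarrow> sum f T = sum f S \<Longrightarrow> T = S"
  proof -
    fix T assume T: "T \<subseteq> S" "sum f T = sum f S"
    have fT: "finite T" using T fin finite_subset by blast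
    have qe: "q (restr x T) = q x"
      using q_restr[OF assms(2,3) fT, of x] q_restr[OF assms(2,3) fin, of x] xS T
      unfolding f_def by simp
    have "vadd (restr x T) (restr x (S - T)) = x"
      using T(1) unfolding vadd_def restr_def S_def supp_def by fastforce
    moreover have "restr x (S - T) \<in> freeV" using fin restr_freeV by blast
    ultimately have "vle (restr x T) x" unfolding vle_def by blast
    then have "restr x T = x"
      using assms(6) restr_freeV[OF fT] qe unfolding q_minimal_def vless_def by blast
    have "S \<subseteq> T"
    proof
      fix j assume j: "j \<in> S"
      show "j \<in> T"
      proof (rule ccontr)
        assume "j \<notin> T"
        then have "restr x T j = 0" unfolding restr_def by simp
        then have "x j = 0" using \<open>restr x T = x\<close> by simp
        then show False using j unfolding S_def supp_def by simp
      qed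
    qed
    then show "T = S" using T by blast
  qed
  have qx: "q x = sum f S"
    using q_restr[OF assms(2,3) fin, of x] xS unfolding f_def by simp
  from sum_two[OF assms(1) fin ne, of f] show ?thesis
  proof
    assume "\<exists>i\<in>S. sum f S = f i"
    then obtain i where "i \<in> S" "sum f S = f i" by blast
    then have "{i} = S" using key[of "{i}"] by simp
    then have "card S = 1" by auto
    then show ?thesis unfolding S_def by simp
  next
    assume "\<exists>i\<in>S. \<exists>j\<in>S. i \<noteq> j \<and> sum f S = f i + f j \<and> sum f S \<in> range (\<lambda>r. ghost_unit * r)"
    then obtain i j where ij: "i \<in> S" "j \<in> S" "i \<noteq> j" "sum f S = f i + f j"
      "sum f S \<in> range (\<lambda>r. ghost_unit * r)" by blast
    then have "{i, j} = S" using key[of "{i,j}"] by simp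
    then have "card S = 2" using ij(3) by auto
    moreover have "q x \<notin> tangibles" using qx ij(5) unfolding tangibles_def by auto
    ultimately show ?thesis unfolding S_def by simp
  qed
qed

end
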